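(* Let $(G,\mathcal{C})$ be CER with respect to the ordering $(V_{\eta_1},\dots,V_{\eta_r})$, with $2$-path function $m$ computed for this ordering. Then: (1) for every $k\in F$, $\mathrm{BlockDiag}(J^k)=J^k=\mathrm{BlockTri}(J^k)$; (2) for every $k\in[r+R]\setminus F$, $\mathrm{BlockDiag}(J^k)=0$; (3) for all $k,h\in F$ and all $\{v,w\}\in\tilde E$, $[J^kJ^h]_{vw}=m_{v\to w}(k,h)$; (4) if moreover (M2) holds, then for every $i\in[r]$ and all $k,h\in F_i$, $J^kJ^h=J^hJ^k$.
   Context: $G=(V,E)$ finite simple undirected graph, $V=[p]$; coloring: vertex color classes $V_1,\dots,V_r$, edge color classes $E_{r+1},\dots,E_{r+R}$ partitioning $E$. $\tilde E=E\cup\{\{v\}:v\in V\}$, $E_i=\{\{v\}:v\in V_i\}$; $c(v,w)=k$ iff $\{v,w\}\in E_k$, $c(v)=c(v,v)$, $c(v,w)=0$ for non-adjacent distinct $v,w$. $J^k\in\{0,1\}^{p\times p}$ with $J^k_{vw}=1$ iff $c(v,w)=k$. $\pi(v)=i$ iff $v\in V_{\eta_i}$; $V_{\le i}=V_{\eta_1}\cup\dots\cup V_{\eta_i}$. For a $p\times p$ matrix $Y$: $\mathrm{BlockTri}(Y)_{vu}=Y_{vu}$ if $\pi(u)\le\pi(v)$ and $0$ otherwise; $\mathrm{BlockDiag}(Y)_{vu}=Y_{vu}$ if $c(v)=c(u)$ and $0$ otherwise. $m_{v\to w}(k,h)=|\{u\in V_{\le\min(\pi(v),\pi(w))}: c(v,u)=k,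 c(u,w)=h\}|$, $m_{v\leftrightarrow w}(k,h)=m_{v\to w}(k,h)+m_{v\to w}(h,k)$. $F_i=\{c(v,w):\{v,w\}\in\tilde E,\ c(v)=c(w)=i\}$, $F=\bigcup_iF_i$. cpeo: every $v\in V_{\eta_i}$ is simplicial (neighbours form a clique) in $G[V_{\eta_i}\cup\dots\cup V_{\eta_r}]$. (M1): $c(v,w)=c(v',w')$ implies $m_{v\leftrightarrow w}=m_{v'\leftrightarrow w'}$. (M2): $c(v)=c(w)$ implies $m_{v\to w}(k,h)=m_{w\to v}(k,h)$ for all $k,h\in F$. CER with respect to the ordering: it is a cpeo and (M1) holds. *)

theory Defs
  imports "Jordan_Normal_Form.Matrix"
begin

text \<open>Vertices are 0,...,p-1 (the paper's [p], shifted so that they coincide with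
matrix indices). Vertex colours are 1..r, edge colours r+1..r+R.
Edges are two-element subsets of the vertex set.\<close>

definition simple_graph :: "nat \<Rightarrow> nat set set \<Rightarrow> bool" where
  "simple_graph p E \<longleftrightarrow> (\<forall>e\<in>E. \<exists>v w. e = {v, w} \<and> v \<noteq> w \<and> v < p \<and> w < p)"

definition coloured_graph ::
  "nat \<Rightarrow> nat \<Rightarrow> nat \<Rightarrow> nat set set \<Rightarrow> (nat \<Rightarrow> nat) \<Rightarrow> (nat set \<Rightarrow> nat) \<Rightarrow> bool" where
  "coloured_graph p r R E vcol ecol \<longleftrightarrow>
     simple_graph p E \<and>
     (\<forall>v<p. vcol v \<in> {1..r}) \<and>
     (\<forall>e\<in>E. ecol e \<in> {r+1..r+R}) \<and>
     (\<forall>i\<in>{1..r}. \<exists>v<p. vcol v = i) \<and>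
     (\<forall>k\<in>{r+1..r+R}. \<exists>e\<in>E. ecol e = k)"

definition Etilde :: "nat \<Rightarrow> nat set set \<Rightarrow> nat set set" where
  "Etilde p E = E \<union> {{v} | v. v < p}"

definition col :: "nat set set \<Rightarrow> (nat \<Rightarrow> nat) \<Rightarrow> (nat set \<Rightarrow> nat) \<Rightarrow> nat \<Rightarrow> nat \<Rightarrow> nat" where
  "col E vcol ecol v w = (if v = w then vcol v else if {v, w} \<in> E then ecol {v, w} else 0)"

definition Jmat :: "nat \<Rightarrow> nat set set \<Rightarrow> (nat \<Rightarrow> nat) \<Rightarrow> (nat set \<Rightarrow> nat) \<Rightarrow> nat \<Rightarrow> int mat" where
  "Jmat p E vcol ecol k = mat p p (\<lambda>(v, w). if col E vcol ecol v w = k then 1 else 0)"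

definition ordering :: "nat \<Rightarrow> (nat \<Rightarrow> nat) \<Rightarrow> bool" where
  "ordering r \<eta> \<longleftrightarrow> bij_betw \<eta> {1..r} {1..r}"

definition pos :: "nat \<Rightarrow> (nat \<Rightarrow> nat) \<Rightarrow> (nat \<Rightarrow> nat) \<Rightarrow> nat \<Rightarrow> nat" where
  "pos r \<eta> vcol v = the_inv_into {1..r} \<eta> (vcol v)"

definition BlockTri :: "(nat \<Rightarrow> nat) \<Rightarrow> 'a::zero mat \<Rightarrow> 'a mat" where
  "BlockTri \<pi> Y = mat (dim_row Y) (dim_col Y) (\<lambda>(v, u). if \<pi> u \<le> \<pi> v then Y $$ (v, u) else 0)"

definition BlockDiag :: "(nat \<Rightarrow> nat) \<Rightarrow> 'a::zero mat \<Rightarrow> 'a mat" where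
  "BlockDiag vcol Y = mat (dim_row Y) (dim_col Y) (\<lambda>(v, u). if vcol v = vcol u then Y $$ (v, u) else 0)"

definition mto ::
  "nat \<Rightarrow> nat set set \<Rightarrow> (nat \<Rightarrow> nat) \<Rightarrow> (nat set \<Rightarrow> nat) \<Rightarrow> (nat \<Rightarrow> nat)
   \<Rightarrow> nat \<Rightarrow> nat \<Rightarrow> nat \<Rightarrow> nat \<Rightarrow> nat" where
  "mto p E vcol ecol \<pi> v w k h =
     card {u. u < p \<and> \<pi> u \<le> min (\<pi> v) (\<pi> w) \<and> col E vcol ecol v u = k \<and> col E vcol ecol u w = h}"

definition mboth ::
  "nat \<Rightarrow> nat set set \<Rightarrow> (nat \<Rightarrow> nat) \<Rightarrow> (nat set \<Rightarrow> nat) \<Rightarrow> (nat \<Rightarrow> nat)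
   \<Rightarrow> nat \<Rightarrow> nat \<Rightarrow> nat \<Rightarrow> nat \<Rightarrow> nat" where
  "mboth p E vcol ecol \<pi> v w k h = mto p E vcol ecol \<pi> v w k h + mto p E vcol ecol \<pi> v w h k"

definition Fcol :: "nat \<Rightarrow> nat set set \<Rightarrow> (nat \<Rightarrow> nat) \<Rightarrow> (nat set \<Rightarrow> nat) \<Rightarrow> nat \<Rightarrow> nat set" where
  "Fcol p E vcol ecol i =
     {col E vcol ecol v w | v w. v < p \<and> w < p \<and> {v, w} \<in> Etilde p E \<and> vcol v = i \<and> vcol w = i}"

definition Fall :: "nat \<Rightarrow> nat \<Rightarrow> nat set set \<Rightarrow> (nat \<Rightarrow> nat) \<Rightarrow> (nat set \<Rightarrow> nat) \<Rightarrow> nat set" where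
  "Fall p r E vcol ecol = (\<Union>i\<in>{1..r}. Fcol p E vcol ecol i)"

text \<open>cpeo: every v is simplicial in G[V_{\<ge> pi(v)}]\<close>
definition cpeo :: "nat \<Rightarrow> nat set set \<Rightarrow> (nat \<Rightarrow> nat) \<Rightarrow> bool" where
  "cpeo p E \<pi> \<longleftrightarrow>
     (\<forall>v<p. \<forall>u<p. \<forall>w<p. \<pi> v \<le> \<pi> u \<and> \<pi> v \<le> \<pi> w \<and> {v, u} \<in> E \<and> {v, w} \<in> E \<and> u \<noteq> w
        \<longrightarrow> {u, w} \<in> E)"

definition M1 ::
  "nat \<Rightarrow> nat set set \<Rightarrow> (nat \<Rightarrow> nat) \<Rightarrow> (nat set \<Rightarrow> nat) \<Rightarrow> (nat \<Rightarrow> nat) \<Rightarrow> bool" where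
  "M1 p E vcol ecol \<pi> \<longleftrightarrow>
     (\<forall>v<p. \<forall>w<p. \<forall>v'<p. \<forall>w'<p. col E vcol ecol v w = col E vcol ecol v' w' \<longrightarrow>
        mboth p E vcol ecol \<pi> v w = mboth p E vcol ecol \<pi> v' w')"

definition M2 ::
  "nat \<Rightarrow> nat \<Rightarrow> nat set set \<Rightarrow> (nat \<Rightarrow> nat) \<Rightarrow> (nat set \<Rightarrow> nat) \<Rightarrow> (nat \<Rightarrow> nat) \<Rightarrow> bool" where
  "M2 p r E vcol ecol \<pi> \<longleftrightarrow>
     (\<forall>v<p. \<forall>w<p. vcol v = vcol w \<longrightarrow>
        (\<forall>k\<in>Fall p r E vcol ecol. \<forall>h\<in>Fall p r E vcol ecol.
           mto p E vcol ecol \<pi> v w k h = mto p E vcol ecol \<pi> w v k h))"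

definition CER ::
  "nat \<Rightarrow> nat set set \<Rightarrow> (nat \<Rightarrow> nat) \<Rightarrow> (nat set \<Rightarrow> nat) \<Rightarrow> (nat \<Rightarrow> nat) \<Rightarrow> bool" where
  "CER p E vcol ecol \<pi> \<longleftrightarrow> cpeo p E \<pi> \<and> M1 p E vcol ecol \<pi>"

end

theory Submission
  imports Defs
begin


lemma col_sym: "col E vcol ecol v w = col E vcol ecol w v"
  by (auto simp: col_def insert_commute)

lemma col_small:
  assumes cg: "coloured_graph p r R E vcol ecol" and "x < p" "u < p"
    and "col E vcol ecol x u = i" "1 \<le> i" "i \<le> r"
  shows "u = x \<and> vcol x = i"
proof (cases "u = x")
  case True then show ?thesis using assms by (simp add: col_def)
next
  case False
  show ?thesis
  proof (cases "{x, u} \<in> E")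
    case True
    then have "ecol {x,u} \<ge> r+1" using cg unfolding coloured_graph_def by auto
    then show ?thesis using assms False True by (simp add: col_def)
  next
    case f2: False
    then show ?thesis using assms False by (simp add: col_def)
  qed
qed

lemma prod_entry:
  assumes "v < p" "w < p"
  shows "(Jmat p E vcol ecol k * Jmat p E vcol ecol h) $$ (v, w)
     = int (card {u. u < p \<and> col E vcol ecol v u = k \<and> col E vcol ecol u w = h})"
proof -
  have "(Jmat p E vcol ecol k * Jmat p E vcol ecol h) $$ (v, w)
     = (\<Sum>u\<in>{0..<p}. (if col E vcol ecol v u = k \<and> col E vcol ecol u w = h then 1 else 0))"
    using assms by (auto simp: Jmat_def scalar_prod_def intro!: sum.cong)
  also have "\<dots> = int (card ({0..<p} \<inter> {u. col E vcol ecol v u = k \<and> col E vcol ecol u w = h}))"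
    by (simp add: sum.If_cases)
  also have "{0..<p} \<inter> {u. col E vcol ecol v u = k \<and> col E vcol ecol u w = h}
     = {u. u < p \<and> col E vcol ecol v u = k \<and> col E vcol ecol u w = h}" by auto
  finally show ?thesis .
qed

lemma F_same:
  assumes cg: "coloured_graph p r R E vcol ecol"
    and m1: "M1 p E vcol ecol (pos r \<eta> vcol)"
    and k: "k \<in> Fall p r E vcol ecol" and vw: "v < p" "w < p" "col E vcol ecol v w = k"
  shows "vcol v = vcol w"
proof -
  let ?c = "col E vcol ecol"
  let ?\<pi> = "pos r \<eta> vcol"
  obtain i a b where i: "i \<in> {1..r}" and ab: "a < p" "b < p" "{a,b} \<in> Etilde p E"
      "vcol a = i" "vcol b = i" "k = ?c a b"
    using k unfolding Fall_def Fcol_def by blast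
  show ?thesis
  proof (cases "a = b")
    case True
    then have "k = i" using ab by (simp add: col_def)
    then show ?thesis using col_small[OF cg vw] i by auto
  next
    case False
    have ma: "mboth p E vcol ecol ?\<pi> a b i k = 2"
    proof -
      have s1: "{u. u < p \<and> ?\<pi> u \<le> min (?\<pi> a) (?\<pi> b) \<and> ?c a u = i \<and> ?c u b = k} = {a}"
      proof
        show "{a} \<subseteq> {u. u < p \<and> ?\<pi> u \<le> min (?\<pi> a) (?\<pi> b) \<and> ?c a u = i \<and> ?c u b = k}"
          using ab by (simp add: pos_def col_def)
        show "{u. u < p \<and> ?\<pi> u \<le> min (?\<pi> a) (?\<pi> b) \<and> ?c a u = i \<and> ?c u b = k} \<subseteq> {a}"
        proof (rule subsetI)
          fix u assume "u \<in> {u. u < p \<and> ?\<pi> u \<le> min (?\<pi> a) (?\<pi> b) \<and> ?c a u = i \<and> ?c u b = k}"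
          then have u: "u < p" "?c a u = i" by auto
          have "u = a" using col_small[OF cg ab(1) u(1) u(2)] i by simp
          then show "u \<in> {a}" by simp
        qed
      qed
      have s2: "{u. u < p \<and> ?\<pi> u \<le> min (?\<pi> a) (?\<pi> b) \<and> ?c a u = k \<and> ?c u b = i} = {b}"
      proof
        show "{b} \<subseteq> {u. u < p \<and> ?\<pi> u \<le> min (?\<pi> a) (?\<pi> b) \<and> ?c a u = k \<and> ?c u b = i}"
          using ab by (simp add: pos_def col_def)
        show "{u. u < p \<and> ?\<pi> u \<le> min (?\<pi> a) (?\<pi> b) \<and> ?c a u = k \<and> ?c u b = i} \<subseteq> {b}"
        proof (rule subsetI)
          fix u assume "u \<in> {u. u < p \<and> ?\<pi> u \<le> min (?\<pi> a) (?\<pi> b) \<and> ?c a u = k \<and> ?c u b = i}"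
          then have u: "u < p" "?c u b = i" by auto
          then have "?c b u = i" using col_sym[of E vcol ecol u b] by simp
          have "u = b" using col_small[OF cg ab(2) u(1) \<open>?c b u = i\<close>] i by simp
          then show "u \<in> {b}" by simp
        qed
      qed
      show ?thesis unfolding mboth_def mto_def s1 s2 by simp
    qed
    have eq: "mboth p E vcol ecol ?\<pi> a b = mboth p E vcol ecol ?\<pi> v w"
    proof -
      have "?c a b = ?c v w" using ab vw by simp
      then show ?thesis using m1 ab(1,2) vw(1,2) unfolding M1_def by blast
    qed
    show ?thesis
    proof (rule ccontr)
      assume ne: "vcol v \<noteq> vcol w"
      have s1: "{u. u < p \<and> ?\<pi> u \<le> min (?\<pi> v) (?\<pi> w) \<and> ?c v u = i \<and> ?c u w = k}
          \<subseteq> (if vcol v = i then {v} else {})"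
      proof (rule subsetI)
        fix u assume "u \<in> {u. u < p \<and> ?\<pi> u \<le> min (?\<pi> v) (?\<pi> w) \<and> ?c v u = i \<and> ?c u w = k}"
        then have u: "u < p" "?c v u = i" by auto
        have "u = v \<and> vcol v = i" using col_small[OF cg vw(1) u(1) u(2)] i by simp
        then show "u \<in> (if vcol v = i then {v} else {})" by simp
      qed
      have s2: "{u. u < p \<and> ?\<pi> u \<le> min (?\<pi> v) (?\<pi> w) \<and> ?c v u = k \<and> ?c u w = i}
          \<subseteq> (if vcol w = i then {w} else {})"
      proof (rule subsetI)
        fix u assume "u \<in> {u. u < p \<and> ?\<pi> u \<le> min (?\<pi> v) (?\<pi> w) \<and> ?c v u = k \<and> ?c u w = i}"
        then have u: "u < p" "?c u w = i" by auto
        then have "?c w u = i" using col_sym[of E vcol ecol u w] by simp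
        have "u = w \<and> vcol w = i" using col_small[OF cg vw(2) u(1) \<open>?c w u = i\<close>] i by simp
        then show "u \<in> (if vcol w = i then {w} else {})" by simp
      qed
      have c1: "card {u. u < p \<and> ?\<pi> u \<le> min (?\<pi> v) (?\<pi> w) \<and> ?c v u = i \<and> ?c u w = k}
          \<le> (if vcol v = i then 1 else 0)"
        using card_mono[OF _ s1] by (cases "vcol v = i") auto
      have c2: "card {u. u < p \<and> ?\<pi> u \<le> min (?\<pi> v) (?\<pi> w) \<and> ?c v u = k \<and> ?c u w = i}
          \<le> (if vcol w = i then 1 else 0)"
        using card_mono[OF _ s2] by (cases "vcol w = i") auto
      have "mboth p E vcol ecol ?\<pi> v w i k \<le> 1"
      proof -
        have "mboth p E vcol ecol ?\<pi> v w i k =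
          card {u. u < p \<and> ?\<pi> u \<le> min (?\<pi> v) (?\<pi> w) \<and> ?c v u = i \<and> ?c u w = k} +
          card {u. u < p \<and> ?\<pi> u \<le> min (?\<pi> v) (?\<pi> w) \<and> ?c v u = k \<and> ?c u w = i}"
          unfolding mboth_def mto_def by (rule refl)
        moreover have "(if vcol v = i then 1 else 0) + (if vcol w = i then 1 else 0) \<le> (1::nat)"
          using ne by auto
        ultimately show ?thesis using c1 c2 by linarith
      qed
      then show False using ma eq by simp
    qed
  qed
qed

theorem proposition7p5:
  fixes p r R :: nat and E :: "nat set set" and vcol :: "nat \<Rightarrow> nat"
    and ecol :: "nat set \<Rightarrow> nat" and \<eta> :: "nat \<Rightarrow> nat"
  defines "\<pi> \<equiv> pos r \<eta> vcol"
  defines "J \<equiv> Jmat p E vcol ecol"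
  defines "F \<equiv> Fall p r E vcol ecol"
  defines "m \<equiv> mto p E vcol ecol \<pi>"
  assumes "coloured_graph p r R E vcol ecol"
    and "ordering r \<eta>"
    and "CER p E vcol ecol \<pi>"
  shows "(\<forall>k\<in>F. BlockDiag vcol (J k) = J k \<and> J k = BlockTri \<pi> (J k)) \<and>
         (\<forall>k\<in>{1..r+R} - F. BlockDiag vcol (J k) = 0\<^sub>m p p) \<and>
         (\<forall>k\<in>F. \<forall>h\<in>F. \<forall>v<p. \<forall>w<p. {v, w} \<in> Etilde p E \<longrightarrow>
            (J k * J h) $$ (v, w) = int (m v w k h)) \<and>
         (M2 p r E vcol ecol \<pi> \<longrightarrow>
           (\<forall>i\<in>{1..r}. \<forall>k\<in>Fcol p E vcol ecol i. \<forall>h\<in>Fcol p E vcol ecol i.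
              J k * J h = J h * J k))"
  proof -
  have cg: "coloured_graph p r R E vcol ecol" and m1: "M1 p E vcol ecol \<pi>"
    using assms(5,7) unfolding CER_def by auto
  have same: "vcol v = vcol w" if "k \<in> F" "v < p" "w < p" "col E vcol ecol v w = k" for k v w
    using F_same[OF cg m1[unfolded \<pi>_def]] that unfolding F_def by blast
  have Jdim[simp]: "dim_row (J k) = p" "dim_col (J k) = p" for k by (simp_all add: J_def Jmat_def)
  have Jent: "v < p \<Longrightarrow> w < p \<Longrightarrow> J k $$ (v, w) = (if col E vcol ecol v w = k then 1 else 0)" for k v w
    by (simp add: J_def Jmat_def)
  have P1: "\<forall>k\<in>F. BlockDiag vcol (J k) = J k \<and> J k = BlockTri \<pi> (J k)"
  proof (intro ballI conjI)
    fix k assume k: "k \<in> F"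
    show "BlockDiag vcol (J k) = J k"
      by (rule eq_matI) (auto simp: BlockDiag_def Jent dest: same[OF k])
    show "J k = BlockTri \<pi> (J k)"
      by (rule eq_matI) (auto simp: BlockTri_def Jent \<pi>_def pos_def dest: same[OF k])
  qed
  have P2: "\<forall>k\<in>{1..r+R} - F. BlockDiag vcol (J k) = 0\<^sub>m p p"
  proof (intro ballI)
    fix k assume k: "k \<in> {1..r+R} - F"
    have "col E vcol ecol v w \<noteq> k" if "v < p" "w < p" "vcol v = vcol w" for v w
    proof
      assume c: "col E vcol ecol v w = k"
      show False
      proof (cases "v = w \<or> {v, w} \<in> E")
        case True
        then have et: "{v,w} \<in> Etilde p E" using that by (auto simp: Etilde_def)
        have "vcol v \<in> {1..r}" using cg that unfolding coloured_graph_def by auto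
        have "k \<in> Fcol p E vcol ecol (vcol v)"
          unfolding Fcol_def mem_Collect_eq
          by (rule exI[of _ v], rule exI[of _ w]) (use that c et in auto)
        then have "k \<in> F" unfolding F_def Fall_def using \<open>vcol v \<in> {1..r}\<close> by blast
        then show False using k by auto
      next
        case False
        then show False using c k by (simp add: col_def)
      qed
    qed
    then show "BlockDiag vcol (J k) = 0\<^sub>m p p"
      by (intro eq_matI) (auto simp: BlockDiag_def Jent)
  qed
  have mset: "card {u. u < p \<and> col E vcol ecol v u = k \<and> col E vcol ecol u w = h} = m v w k h"
    if "k \<in> F" "h \<in> F" "v < p" "w < p" for k h v w
  proof -
    have "{u. u < p \<and> col E vcol ecol v u = k \<and> col E vcol ecol u w = h}
       = {u. u < p \<and> \<pi> u \<le> min (\<pi> v) (\<pi> w) \<and> col E vcol ecol v u = k \<and> col E vcol ecol u w = h}"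
    proof (intro Collect_cong iffI)
      fix u assume u: "u < p \<and> col E vcol ecol v u = k \<and> col E vcol ecol u w = h"
      have "vcol v = vcol u" using same[OF that(1) that(3)] u by auto
      moreover have "vcol u = vcol w" using same[OF that(2) _ that(4)] u by auto
      ultimately show "u < p \<and> \<pi> u \<le> min (\<pi> v) (\<pi> w) \<and> col E vcol ecol v u = k \<and> col E vcol ecol u w = h"
        using u by (simp add: \<pi>_def pos_def)
    qed auto
    then show ?thesis unfolding m_def mto_def by simp
  qed
  have P3: "\<forall>k\<in>F. \<forall>h\<in>F. \<forall>v<p. \<forall>w<p. {v, w} \<in> Etilde p E \<longrightarrow>
            (J k * J h) $$ (v, w) = int (m v w k h)"
    using mset prod_entry unfolding J_def by simp
  have P4: "M2 p r E vcol ecol \<pi> \<longrightarrow>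
           (\<forall>i\<in>{1..r}. \<forall>k\<in>Fcol p E vcol ecol i. \<forall>h\<in>Fcol p E vcol ecol i.
              J k * J h = J h * J k)"
  proof (intro impI ballI)
    fix i k h assume m2: "M2 p r E vcol ecol \<pi>" and i: "i \<in> {1..r}"
      and k: "k \<in> Fcol p E vcol ecol i" and h: "h \<in> Fcol p E vcol ecol i"
    have kF: "k \<in> F" and hF: "h \<in> F" using i k h unfolding F_def Fall_def by auto
    show "J k * J h = J h * J k"
    proof (rule eq_matI)
      fix v w assume v: "v < dim_row (J h * J k)" and w: "w < dim_col (J h * J k)"
      then have v: "v < p" and w: "w < p" by auto
      have sw: "{u. u < p \<and> col E vcol ecol v u = h \<and> col E vcol ecol u w = k}
          = {u. u < p \<and> col E vcol ecol w u = k \<and> col E vcol ecol u v = h}"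
        using col_sym by blast
      have L: "(J k * J h) $$ (v, w) = int (m v w k h)"
        using mset[OF kF hF v w] prod_entry[OF v w] unfolding J_def by simp
      have R: "(J h * J k) $$ (v, w) = int (m w v k h)"
        using mset[OF kF hF w v] prod_entry[OF v w, of E vcol ecol h k] sw unfolding J_def by simp
      show "(J k * J h) $$ (v, w) = (J h * J k) $$ (v, w)"
      proof (cases "vcol v = vcol w")
        case True
        then have "m v w k h = m w v k h" using m2 v w kF hF unfolding M2_def m_def F_def by blast
        then show ?thesis using L R by simp
      next
        case False
        have "False" if "u < p" "col E vcol ecol v u = k" "col E vcol ecol u w = h" for u
          using same[OF kF v that(1) that(2)] same[OF hF that(1) w that(3)] False by simp
        then have e1: "{u. u < p \<and> col E vcol ecol v u = k \<and> col E vcol ecol u w = h} = {}"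
          by blast
        have "False" if "u < p" "col E vcol ecol w u = k" "col E vcol ecol u v = h" for u
          using same[OF kF w that(1) that(2)] same[OF hF that(1) v that(3)] False by simp
        then have e2: "{u. u < p \<and> col E vcol ecol w u = k \<and> col E vcol ecol u v = h} = {}"
          by blast
        show ?thesis using L R mset[OF kF hF v w] mset[OF kF hF w v] e1 e2 by simp
      qed
    qed auto
  qed
  show ?thesis using P1 P2 P3 P4 by blast
qed

end
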